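(* Let $\mathbb{C}$ be a locally small category in which all morphisms are monomorphisms, and let $A\in\mathrm{Ob}(\mathbb{C})$. Then $t_{\mathbb{C}}(A)$ is finite if and only if both $t^\sim_{\mathbb{C}}(A)$ and $\mathrm{Aut}(A)$ are finite, and in that case $t_{\mathbb{C}}(A)=|\mathrm{Aut}(A)|\cdot t^\sim_{\mathbb{C}}(A)$.
   Context: For $k\ge2$, $t\ge1$ and objects $A,B,C$: $C\to(B)^A_{k,t}$ means that for every $\chi:\hom(A,C)\to\{0,\dots,k-1\}$ there is $w\in\hom(B,C)$ with $|\chi(w\cdot\hom(A,B))|\le t$ (where $w\cdot X=\{w\cdot x:x\in X\}$). $t_{\mathbb{C}}(A)$ is the least positive integer $n$ such that for all $k\ge2$ and all $B\in\mathrm{Ob}(\mathbb{C})$ there is $C\in\mathrm{Ob}(\mathbb{C})$ with $C\to(B)^A_{k,n}$; $t_{\mathbb{C}}(A)=\infty$ if no such $n$ exists. For $f,f'\in\hom(A,B)$ let $f\sim_A f'$ iff $f'=f\cdot\alpha$ for some $\alpha\in\mathrm{Aut}(A)$, and $\binom{B}{A}=\hom(A,B)/{\sim_A}$; for $w\in\hom(B,C)$, $w\cdot(f/{\sim_A})=(w\cdot f)/{\sim_A}$. $C\overset{\sim}{\to}(B)^A_{k,t}$ means that for every $\chi:\binom{C}{A}\to\{0,\dots,k-1\}$ there is $w\in\hom(B,C)$ with $|\chi(w\cdot\binom{B}{A})|\le t$. $t^\sim_{\mathbb{C}}(A)$ is the least positive integer $n$ such that for all $k\ge2$ and all $B$ there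 is $C$ with $C\overset{\sim}{\to}(B)^A_{k,n}$, and $\infty$ otherwise. *)

theory Defs
  imports "HOL-Library.Extended_Nat"
begin

text \<open>A (locally small) category given by a set of objects Ob, hom-sets hom A B,
  composition cmp (cmp g f = g after f) and identities idm.  Hom-sets are sets,
  so local smallness is automatic.\<close>

definition is_category ::
  "'o set \<Rightarrow> ('o \<Rightarrow> 'o \<Rightarrow> 'm set) \<Rightarrow> ('m \<Rightarrow> 'm \<Rightarrow> 'm) \<Rightarrow> ('o \<Rightarrow> 'm) \<Rightarrow> bool" where
  "is_category Ob hom cmp idm \<longleftrightarrow>
     (\<forall>A\<in>Ob. \<forall>B\<in>Ob. \<forall>C\<in>Ob. \<forall>f\<in>hom A B. \<forall>g\<in>hom B C. cmp g f \<in> hom A C)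
   \<and> (\<forall>A\<in>Ob. \<forall>B\<in>Ob. \<forall>C\<in>Ob. \<forall>D\<in>Ob. \<forall>f\<in>hom A B. \<forall>g\<in>hom B C. \<forall>h\<in>hom C D.
        cmp h (cmp g f) = cmp (cmp h g) f)
   \<and> (\<forall>A\<in>Ob. idm A \<in> hom A A)
   \<and> (\<forall>A\<in>Ob. \<forall>B\<in>Ob. \<forall>f\<in>hom A B. cmp (idm B) f = f \<and> cmp f (idm A) = f)
   \<and> (\<forall>A\<in>Ob. \<forall>B\<in>Ob. \<forall>A'\<in>Ob. \<forall>B'\<in>Ob. hom A B \<inter> hom A' B' \<noteq> {} \<longrightarrow> A = A' \<and> B = B')"

definition all_mono ::
  "'o set \<Rightarrow> ('o \<Rightarrow> 'o \<Rightarrow> 'm set) \<Rightarrow> ('m \<Rightarrow> 'm \<Rightarrow> 'm) \<Rightarrow> bool" where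
  "all_mono Ob hom cmp \<longleftrightarrow>
     (\<forall>A\<in>Ob. \<forall>B\<in>Ob. \<forall>C\<in>Ob. \<forall>f\<in>hom B C. \<forall>g\<in>hom A B. \<forall>h\<in>hom A B.
        cmp f g = cmp f h \<longrightarrow> g = h)"

definition Aut ::
  "('o \<Rightarrow> 'o \<Rightarrow> 'm set) \<Rightarrow> ('m \<Rightarrow> 'm \<Rightarrow> 'm) \<Rightarrow> ('o \<Rightarrow> 'm) \<Rightarrow> 'o \<Rightarrow> 'm set" where
  "Aut hom cmp idm A = {f \<in> hom A A. \<exists>g\<in>hom A A. cmp g f = idm A \<and> cmp f g = idm A}"

definition arrows ::
  "('o \<Rightarrow> 'o \<Rightarrow> 'm set) \<Rightarrow> ('m \<Rightarrow> 'm \<Rightarrow> 'm) \<Rightarrow> 'o \<Rightarrow> 'o \<Rightarrow> 'o \<Rightarrow> nat \<Rightarrow> nat \<Rightarrow> bool" where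
  "arrows hom cmp C B A k t \<longleftrightarrow>
     (\<forall>\<chi> :: 'm \<Rightarrow> nat. (\<forall>x\<in>hom A C. \<chi> x < k) \<longrightarrow>
        (\<exists>w\<in>hom B C. card (\<chi> ` ((\<lambda>f. cmp w f) ` hom A B)) \<le> t))"

definition small_ramsey_deg ::
  "'o set \<Rightarrow> ('o \<Rightarrow> 'o \<Rightarrow> 'm set) \<Rightarrow> ('m \<Rightarrow> 'm \<Rightarrow> 'm) \<Rightarrow> 'o \<Rightarrow> enat" where
  "small_ramsey_deg Ob hom cmp A =
     (let P = (\<lambda>n. 0 < n \<and> (\<forall>k\<ge>2. \<forall>B\<in>Ob. \<exists>C\<in>Ob. arrows hom cmp C B A k n))
      in if \<exists>n. P n then enat (LEAST n. P n) else \<infinity>)"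

definition simcls ::
  "('o \<Rightarrow> 'o \<Rightarrow> 'm set) \<Rightarrow> ('m \<Rightarrow> 'm \<Rightarrow> 'm) \<Rightarrow> ('o \<Rightarrow> 'm) \<Rightarrow> 'o \<Rightarrow> 'm \<Rightarrow> 'm set" where
  "simcls hom cmp idm A f = {f'. \<exists>\<alpha>\<in>Aut hom cmp idm A. f' = cmp f \<alpha>}"

definition binom ::
  "('o \<Rightarrow> 'o \<Rightarrow> 'm set) \<Rightarrow> ('m \<Rightarrow> 'm \<Rightarrow> 'm) \<Rightarrow> ('o \<Rightarrow> 'm) \<Rightarrow> 'o \<Rightarrow> 'o \<Rightarrow> 'm set set" where
  "binom hom cmp idm B A = simcls hom cmp idm A ` hom A B"

definition arrows_sim ::
  "('o \<Rightarrow> 'o \<Rightarrow> 'm set) \<Rightarrow> ('m \<Rightarrow> 'm \<Rightarrow> 'm) \<Rightarrow> ('o \<Rightarrow> 'm) \<Rightarrow> 'o \<Rightarrow> 'o \<Rightarrow> 'o \<Rightarrow> nat \<Rightarrow> nat \<Rightarrow> bool" where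
  "arrows_sim hom cmp idm C B A k t \<longleftrightarrow>
     (\<forall>\<chi> :: 'm set \<Rightarrow> nat. (\<forall>X\<in>binom hom cmp idm C A. \<chi> X < k) \<longrightarrow>
        (\<exists>w\<in>hom B C. card (\<chi> ` ((\<lambda>f. simcls hom cmp idm A (cmp w f)) ` hom A B)) \<le> t))"

definition small_ramsey_deg_sim ::
  "'o set \<Rightarrow> ('o \<Rightarrow> 'o \<Rightarrow> 'm set) \<Rightarrow> ('m \<Rightarrow> 'm \<Rightarrow> 'm) \<Rightarrow> ('o \<Rightarrow> 'm) \<Rightarrow> 'o \<Rightarrow> enat" where
  "small_ramsey_deg_sim Ob hom cmp idm A =
     (let P = (\<lambda>n. 0 < n \<and> (\<forall>k\<ge>2. \<forall>B\<in>Ob. \<exists>C\<in>Ob. arrows_sim hom cmp idm C B A k n))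
      in if \<exists>n. P n then enat (LEAST n. P n) else \<infinity>)"

end

theory Submission
  imports Defs "HOL-Library.FuncSet"
begin

locale rcat =
  fixes Ob :: "'o set" and hom :: "'o \<Rightarrow> 'o \<Rightarrow> 'm set"
    and cmp :: "'m \<Rightarrow> 'm \<Rightarrow> 'm" and idm :: "'o \<Rightarrow> 'm" and A :: 'o
  assumes cat: "is_category Ob hom cmp idm"
    and mon: "all_mono Ob hom cmp"
    and AOb: "A \<in> Ob"
begin

lemma comp: "X \<in> Ob \<Longrightarrow> Y \<in> Ob \<Longrightarrow> Z \<in> Ob \<Longrightarrow> f \<in> hom X Y \<Longrightarrow> g \<in> hom Y Z \<Longrightarrow> cmp g f \<in> hom X Z"
  using cat unfolding is_category_def by blast

lemma assoc: "X \<in> Ob \<Longrightarrow> Y \<in> Ob \<Longrightarrow> Z \<in> Ob \<Longrightarrow> W \<in> Ob \<Longrightarrow> f \<in> hom X Y \<Longrightarrow> g \<in> hom Y Z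
  \<Longrightarrow> h \<in> hom Z W \<Longrightarrow> cmp h (cmp g f) = cmp (cmp h g) f"
  using cat unfolding is_category_def by blast

lemma idh: "X \<in> Ob \<Longrightarrow> idm X \<in> hom X X"
  using cat unfolding is_category_def by blast

lemma idl: "X \<in> Ob \<Longrightarrow> Y \<in> Ob \<Longrightarrow> f \<in> hom X Y \<Longrightarrow> cmp (idm Y) f = f"
  using cat unfolding is_category_def by blast

lemma idr: "X \<in> Ob \<Longrightarrow> Y \<in> Ob \<Longrightarrow> f \<in> hom X Y \<Longrightarrow> cmp f (idm X) = f"
  using cat unfolding is_category_def by blast

lemma monoD: "X \<in> Ob \<Longrightarrow> Y \<in> Ob \<Longrightarrow> Z \<in> Ob \<Longrightarrow> f \<in> hom Y Z \<Longrightarrow> g \<in> hom X Y \<Longrightarrow> h \<in> hom X Y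
  \<Longrightarrow> cmp f g = cmp f h \<Longrightarrow> g = h"
  using mon unfolding all_mono_def by blast

abbreviation "Au \<equiv> Aut hom cmp idm A"
abbreviation "cls \<equiv> simcls hom cmp idm A"

lemma Aut_hom: "\<alpha> \<in> Au \<Longrightarrow> \<alpha> \<in> hom A A"
  unfolding Aut_def by blast

lemma id_Aut: "idm A \<in> Au"
  unfolding Aut_def using idh[OF AOb] idl[OF AOb AOb] by auto

lemma Aut_inv: "\<alpha> \<in> Au \<Longrightarrow> \<exists>\<beta>\<in>Au. cmp \<beta> \<alpha> = idm A \<and> cmp \<alpha> \<beta> = idm A"
  unfolding Aut_def by blast

lemma Aut_comp: assumes "\<alpha> \<in> Au" "\<beta> \<in> Au" shows "cmp \<alpha> \<beta> \<in> Au"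
proof -
  obtain \<alpha>' where a: "\<alpha>' \<in> hom A A" "cmp \<alpha>' \<alpha> = idm A" "cmp \<alpha> \<alpha>' = idm A"
    using assms(1) unfolding Aut_def by blast
  obtain \<beta>' where b: "\<beta>' \<in> hom A A" "cmp \<beta>' \<beta> = idm A" "cmp \<beta> \<beta>' = idm A"
    using assms(2) unfolding Aut_def by blast
  have ha: "\<alpha> \<in> hom A A" "\<beta> \<in> hom A A" using assms Aut_hom by auto
  have ab: "cmp \<alpha> \<beta> \<in> hom A A" using comp[OF AOb AOb AOb ha(2) ha(1)] .
  have ab': "cmp \<beta>' \<alpha>' \<in> hom A A" using comp[OF AOb AOb AOb a(1) b(1)] .
  have "cmp (cmp \<beta>' \<alpha>') (cmp \<alpha> \<beta>) = cmp \<beta>' (cmp \<alpha>' (cmp \<alpha> \<beta>))"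
    using assoc[OF AOb AOb AOb AOb ab a(1) b(1)] by simp
  also have "cmp \<alpha>' (cmp \<alpha> \<beta>) = cmp (cmp \<alpha>' \<alpha>) \<beta>"
    using assoc[OF AOb AOb AOb AOb ha(2) ha(1) a(1)] .
  also have "\<dots> = \<beta>" using a(2) idl[OF AOb AOb ha(2)] by simp
  finally have 1: "cmp (cmp \<beta>' \<alpha>') (cmp \<alpha> \<beta>) = idm A" using b(2) by simp
  have "cmp (cmp \<alpha> \<beta>) (cmp \<beta>' \<alpha>') = cmp \<alpha> (cmp \<beta> (cmp \<beta>' \<alpha>'))"
    using assoc[OF AOb AOb AOb AOb ab' ha(2) ha(1)] by simp
  also have "cmp \<beta> (cmp \<beta>' \<alpha>') = cmp (cmp \<beta> \<beta>') \<alpha>'"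
    using assoc[OF AOb AOb AOb AOb a(1) b(1) ha(2)] .
  also have "\<dots> = \<alpha>'" using b(3) idl[OF AOb AOb a(1)] by simp
  finally have 2: "cmp (cmp \<alpha> \<beta>) (cmp \<beta>' \<alpha>') = idm A" using a(3) by simp
  show ?thesis unfolding Aut_def using ab ab' 1 2 by blast
qed

lemma cls_self: "C \<in> Ob \<Longrightarrow> u \<in> hom A C \<Longrightarrow> u \<in> cls u"
  unfolding simcls_def using id_Aut idr[OF AOb] by force

lemma cls_Aut: assumes C: "C \<in> Ob" and u: "u \<in> hom A C" and d: "\<delta> \<in> Au"
  shows "cls (cmp u \<delta>) = cls u"
proof
  have dh: "\<delta> \<in> hom A A" using d Aut_hom by auto
  show "cls (cmp u \<delta>) \<subseteq> cls u"
  proof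
    fix x assume "x \<in> cls (cmp u \<delta>)"
    then obtain \<alpha> where a: "\<alpha> \<in> Au" "x = cmp (cmp u \<delta>) \<alpha>" unfolding simcls_def by blast
    then have "x = cmp u (cmp \<delta> \<alpha>)" using assoc[OF AOb AOb AOb C Aut_hom[OF a(1)] dh u] by simp
    then show "x \<in> cls u" unfolding simcls_def using Aut_comp[OF d a(1)] by blast
  qed
  show "cls u \<subseteq> cls (cmp u \<delta>)"
  proof
    fix x assume "x \<in> cls u"
    then obtain \<alpha> where a: "\<alpha> \<in> Au" "x = cmp u \<alpha>" unfolding simcls_def by blast
    obtain \<delta>' where d': "\<delta>' \<in> Au" "cmp \<delta>' \<delta> = idm A" "cmp \<delta> \<delta>' = idm A" using Aut_inv[OF d] by blast
    have ah: "\<alpha> \<in> hom A A" "\<delta>' \<in> hom A A" using a d' Aut_hom by auto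
    have dd: "cmp \<delta>' \<alpha> \<in> hom A A" using comp[OF AOb AOb AOb ah(1) ah(2)] .
    have "cmp (cmp u \<delta>) (cmp \<delta>' \<alpha>) = cmp u (cmp \<delta> (cmp \<delta>' \<alpha>))"
      using assoc[OF AOb AOb AOb C dd dh u] by simp
    also have "\<dots> = cmp u (cmp (cmp \<delta> \<delta>') \<alpha>)"
      using assoc[OF AOb AOb AOb AOb ah(1) ah(2) dh] by simp
    also have "\<dots> = x" using d' a idl[OF AOb AOb] ah by simp
    finally have xe: "cmp (cmp u \<delta>) (cmp \<delta>' \<alpha>) = x" .
    have "x = cmp (cmp u \<delta>) (cmp \<delta>' \<alpha>)" using xe by (rule sym)
    then show "x \<in> cls (cmp u \<delta>)" unfolding simcls_def using Aut_comp[OF d'(1) a(1)] by blast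
  qed
qed

definition rep :: "'m set \<Rightarrow> 'm" where "rep X = (SOME x. x \<in> X)"

lemma rep_cls: assumes "C \<in> Ob" "u \<in> hom A C"
  shows "\<exists>\<gamma>\<in>Au. rep (cls u) = cmp u \<gamma>"
proof -
  have "rep (cls u) \<in> cls u" unfolding rep_def using cls_self[OF assms] by (metis someI)
  then show ?thesis unfolding simcls_def by blast
qed

lemma rep_hom: assumes "C \<in> Ob" "u \<in> hom A C" shows "rep (cls u) \<in> hom A C"
proof -
  obtain \<gamma> where "\<gamma> \<in> Au" "rep (cls u) = cmp u \<gamma>" using rep_cls[OF assms] by blast
  then show ?thesis using comp[OF AOb AOb assms(1) Aut_hom assms(2)] by simp
qed

lemma from_rep: assumes C: "C \<in> Ob" and u: "u \<in> hom A C"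
  shows "\<exists>\<gamma>\<in>Au. u = cmp (rep (cls u)) \<gamma>"
proof -
  obtain \<gamma> where g: "\<gamma> \<in> Au" "rep (cls u) = cmp u \<gamma>" using rep_cls[OF assms] by blast
  obtain \<gamma>' where g': "\<gamma>' \<in> Au" "cmp \<gamma> \<gamma>' = idm A" using Aut_inv[OF g(1)] by blast
  have "cmp (rep (cls u)) \<gamma>' = cmp u (cmp \<gamma> \<gamma>')"
    using g assoc[OF AOb AOb AOb C Aut_hom[OF g'(1)] Aut_hom[OF g(1)] u] by simp
  also have "\<dots> = u" using g' idr[OF AOb C u] by simp
  finally show ?thesis using g'(1) by (intro bexI[of _ \<gamma>']) auto
qed

lemma cls_binom: "C \<in> Ob \<Longrightarrow> u \<in> hom A C \<Longrightarrow> cls u \<in> binom hom cmp idm C A"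
  unfolding binom_def by blast

end

context rcat begin

definition Q :: "nat \<Rightarrow> bool" where
  "Q m \<longleftrightarrow> (\<forall>k\<ge>2. \<forall>B\<in>Ob. \<exists>C\<in>Ob. arrows hom cmp C B A k m)"
definition Qs :: "nat \<Rightarrow> bool" where
  "Qs m \<longleftrightarrow> (\<forall>k\<ge>2. \<forall>B\<in>Ob. \<exists>C\<in>Ob. arrows_sim hom cmp idm C B A k m)"

lemma Q_Qs: assumes "Q m" shows "Qs m"
  unfolding Qs_def
proof (intro allI impI ballI)
  fix k :: nat and B assume k: "2 \<le> k" and B: "B \<in> Ob"
  obtain C where C: "C \<in> Ob" "arrows hom cmp C B A k m" using assms k B unfolding Q_def by blast
  show "\<exists>C\<in>Ob. arrows_sim hom cmp idm C B A k m"
  proof (intro bexI[OF _ C(1)], unfold arrows_sim_def, intro allI impI)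
    fix \<chi> :: "'m set \<Rightarrow> nat" assume h: "\<forall>X\<in>binom hom cmp idm C A. \<chi> X < k"
    have hc: "(\<chi> \<circ> cls) x < k" if xh: "x \<in> hom A C" for x
      using h cls_binom[OF C(1) xh] by simp
    have "\<forall>\<chi>' :: 'm \<Rightarrow> nat. (\<forall>x\<in>hom A C. \<chi>' x < k) \<longrightarrow>
        (\<exists>w\<in>hom B C. card (\<chi>' ` ((\<lambda>f. cmp w f) ` hom A B)) \<le> m)"
      using C(2) unfolding arrows_def .
    then have "(\<forall>x\<in>hom A C. (\<chi> \<circ> cls) x < k) \<longrightarrow>
        (\<exists>w\<in>hom B C. card ((\<chi> \<circ> cls) ` ((\<lambda>f. cmp w f) ` hom A B)) \<le> m)"
      by (rule spec)
    moreover have "\<forall>x\<in>hom A C. (\<chi> \<circ> cls) x < k" using hc by blast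
    ultimately have "\<exists>w\<in>hom B C. card ((\<chi> \<circ> cls) ` ((\<lambda>f. cmp w f) ` hom A B)) \<le> m"
      by (rule mp)
    then obtain w where w: "w \<in> hom B C" "card ((\<chi> \<circ> cls) ` (\<lambda>f. cmp w f) ` hom A B) \<le> m"
      by (rule bexE)
    have "(\<chi> \<circ> cls) ` (\<lambda>f. cmp w f) ` hom A B = \<chi> ` (\<lambda>f. cls (cmp w f)) ` hom A B"
      by (simp add: image_image)
    then have "card (\<chi> ` (\<lambda>f. cls (cmp w f)) ` hom A B) \<le> m" using w(2) by simp
    then show "\<exists>w\<in>hom B C. card (\<chi> ` (\<lambda>f. cls (cmp w f)) ` hom A B) \<le> m" using w(1) by (rule bexI)
  qed
qed

lemma not_Qs0: "\<not> Qs 0"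
proof
  assume "Qs 0"
  then obtain C where C: "C \<in> Ob" "arrows_sim hom cmp idm C A A 2 0" unfolding Qs_def using AOb by blast
  have "\<forall>\<chi> :: 'm set \<Rightarrow> nat. (\<forall>X\<in>binom hom cmp idm C A. \<chi> X < 2) \<longrightarrow>
        (\<exists>w\<in>hom A C. card (\<chi> ` ((\<lambda>f. cls (cmp w f)) ` hom A A)) \<le> 0)"
    using C(2) unfolding arrows_sim_def .
  then have "(\<forall>X\<in>binom hom cmp idm C A. (\<lambda>_. 0::nat) X < 2) \<longrightarrow>
        (\<exists>w\<in>hom A C. card ((\<lambda>_. 0::nat) ` ((\<lambda>f. cls (cmp w f)) ` hom A A)) \<le> 0)"
    by (rule spec)
  then have "\<exists>w\<in>hom A C. card ((\<lambda>_. 0::nat) ` ((\<lambda>f. cls (cmp w f)) ` hom A A)) \<le> 0"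
    by simp
  then obtain w where w: "w \<in> hom A C" "card ((\<lambda>_. 0::nat) ` (\<lambda>f. cls (cmp w f)) ` hom A A) \<le> 0"
    by (rule bexE)
  have "hom A A \<noteq> {}" using idh[OF AOb] by blast
  then have "(\<lambda>f. cls (cmp w f)) ` hom A A \<noteq> {}" by blast
  then have "(\<lambda>_. 0::nat) ` (\<lambda>f. cls (cmp w f)) ` hom A A = {0}" by blast
  then show False using w(2) by simp
qed

lemma not_Q0: "\<not> Q 0" using not_Qs0 Q_Qs by blast

end

context rcat begin

lemma hom_cw: "B \<in> Ob \<Longrightarrow> C \<in> Ob \<Longrightarrow> w \<in> hom B C \<Longrightarrow> f \<in> hom A B \<Longrightarrow> cmp w f \<in> hom A C"
  using comp[OF AOb] by blast

lemma upper: assumes fin: "finite Au" and q: "Qs n"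
  shows "Q (card Au * n)"
  unfolding Q_def
proof (intro allI impI ballI)
  fix k :: nat and B assume k: "2 \<le> k" and B: "B \<in> Ob"
  define a where "a = card Au"
  have "Au \<noteq> {}" using id_Aut by blast
  then have "0 < a" unfolding a_def using fin by (simp add: card_gt_0_iff)
  then have a1: "a \<ge> 1" by simp
  obtain e where e: "bij_betw e {0..<a} Au" unfolding a_def using ex_bij_betw_nat_finite[OF fin] by blast
  define PS where "PS = PiE {0..<a} (\<lambda>_. {0..<k})"
  define K where "K = card PS"
  have finPS: "finite PS" unfolding PS_def by (simp add: finite_PiE)
  have K: "K = k ^ a" unfolding K_def PS_def by (simp add: card_PiE)
  have "k \<le> k ^ a" using k a1 by (intro self_le_power) auto
  then have K2: "K \<ge> 2" unfolding K using k by simp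
  obtain dec where dec: "bij_betw dec {0..<K} PS" unfolding K_def using ex_bij_betw_nat_finite[OF finPS] by blast
  define enc where "enc = inv_into {0..<K} dec"
  obtain C where C: "C \<in> Ob" "arrows_sim hom cmp idm C B A K n" using q K2 B unfolding Qs_def by blast
  show "\<exists>C\<in>Ob. arrows hom cmp C B A k (card Au * n)"
  proof (intro bexI[OF _ C(1)], unfold arrows_def, intro allI impI)
    fix \<chi> :: "'m \<Rightarrow> nat" assume h: "\<forall>x\<in>hom A C. \<chi> x < k"
    define vec where "vec X = restrict (\<lambda>i. \<chi> (cmp (rep X) (e i))) {0..<a}" for X
    define \<chi>s where "\<chi>s X = enc (vec X)" for X
    have vecPS: "vec X \<in> PS" if Xb: "X \<in> binom hom cmp idm C A" for X
    proof -
      obtain v where v: "v \<in> hom A C" "X = cls v" using Xb unfolding binom_def by blast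
      have rX: "rep X \<in> hom A C" using rep_hom[OF C(1) v(1)] v by simp
      have "\<chi> (cmp (rep X) (e i)) < k" if ia: "i < a" for i
      proof -
        have "e i \<in> Au" using e ia unfolding bij_betw_def by auto
        then have "cmp (rep X) (e i) \<in> hom A C" using comp[OF AOb AOb C(1) Aut_hom rX] by blast
        then show ?thesis using h by blast
      qed
      then show ?thesis unfolding PS_def vec_def by auto
    qed
    have chs: "\<chi>s X \<in> {0..<K}" "dec (\<chi>s X) = vec X" if Xb: "X \<in> binom hom cmp idm C A" for X
    proof -
      have vp: "vec X \<in> PS" using vecPS[OF Xb] .
      have vi: "vec X \<in> dec ` {0..<K}" using bij_betw_imp_surj_on[OF dec] vp by simp
      show "\<chi>s X \<in> {0..<K}" unfolding \<chi>s_def enc_def by (rule inv_into_into[OF vi])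
      show "dec (\<chi>s X) = vec X" unfolding \<chi>s_def enc_def by (rule f_inv_into_f[OF vi])
    qed
    have hK: "\<forall>X\<in>binom hom cmp idm C A. \<chi>s X < K" using chs(1) by auto
    have "\<forall>\<chi>' :: 'm set \<Rightarrow> nat. (\<forall>X\<in>binom hom cmp idm C A. \<chi>' X < K) \<longrightarrow>
        (\<exists>w\<in>hom B C. card (\<chi>' ` ((\<lambda>f. cls (cmp w f)) ` hom A B)) \<le> n)"
      using C(2) unfolding arrows_sim_def .
    then have "(\<forall>X\<in>binom hom cmp idm C A. \<chi>s X < K) \<longrightarrow>
        (\<exists>w\<in>hom B C. card (\<chi>s ` ((\<lambda>f. cls (cmp w f)) ` hom A B)) \<le> n)"
      by (rule spec)
    then have "\<exists>w\<in>hom B C. card (\<chi>s ` ((\<lambda>f. cls (cmp w f)) ` hom A B)) \<le> n"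
      using hK by (rule mp)
    then obtain w where w: "w \<in> hom B C" "card (\<chi>s ` (\<lambda>f. cls (cmp w f)) ` hom A B) \<le> n"
      by (rule bexE)
    define CI where "CI = \<chi>s ` (\<lambda>f. cls (cmp w f)) ` hom A B"
    have CIsub: "CI \<subseteq> {0..<K}" unfolding CI_def using chs(1) cls_binom[OF C(1)] hom_cw[OF B C(1) w(1)] by auto
    have finCI: "finite CI" by (rule finite_subset[OF CIsub finite_atLeastLessThan])
    have sub: "\<chi> ` (\<lambda>f. cmp w f) ` hom A B \<subseteq> (\<lambda>(c,i). dec c i) ` (CI \<times> {0..<a})"
    proof
      fix y assume "y \<in> \<chi> ` (\<lambda>f. cmp w f) ` hom A B"
      then obtain f where f: "f \<in> hom A B" "y = \<chi> (cmp w f)" by blast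
      define u where "u = cmp w f"
      have u: "u \<in> hom A C" using hom_cw[OF B C(1) w(1) f(1)] u_def by simp
      obtain \<gamma> where g: "\<gamma> \<in> Au" "u = cmp (rep (cls u)) \<gamma>" using from_rep[OF C(1) u] by blast
      have "\<gamma> \<in> e ` {0..<a}" using bij_betw_imp_surj_on[OF e] g(1) by simp
      then obtain i where i: "i < a" "\<gamma> = e i" by auto
      have "y = \<chi> u" using f(2) u_def by simp
      also have "\<dots> = \<chi> (cmp (rep (cls u)) \<gamma>)" using arg_cong[OF g(2), of \<chi>] .
      also have "\<dots> = \<chi> (cmp (rep (cls u)) (e i))" by (simp only: i(2))
      also have "\<dots> = vec (cls u) i" unfolding vec_def using i(1) by simp
      also have "\<dots> = dec (\<chi>s (cls u)) i" using chs(2)[OF cls_binom[OF C(1) u]] by simp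
      finally have "y = (\<lambda>(c,i). dec c i) (\<chi>s (cls u), i)" by simp
      moreover have "(\<chi>s (cls u), i) \<in> CI \<times> {0..<a}" unfolding CI_def u_def using f i by auto
      ultimately show "y \<in> (\<lambda>(c,i). dec c i) ` (CI \<times> {0..<a})" by blast
    qed
    have finP: "finite (CI \<times> {0..<a})" by (intro finite_cartesian_product finCI finite_atLeastLessThan)
    have cin: "card CI \<le> n" using w(2) unfolding CI_def .
    have "card (\<chi> ` (\<lambda>f. cmp w f) ` hom A B) \<le> card ((\<lambda>(c,i). dec c i) ` (CI \<times> {0..<a}))"
      by (rule card_mono[OF finite_imageI[OF finP] sub])
    also have "\<dots> \<le> card (CI \<times> {0..<a})" by (rule card_image_le[OF finP])
    also have "\<dots> = card CI * a" by (simp add: card_cartesian_product)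
    also have "\<dots> \<le> n * a" using cin by (rule mult_le_mono1)
    also have "\<dots> = card Au * n" unfolding a_def by (rule mult.commute)
    finally have "card (\<chi> ` (\<lambda>f. cmp w f) ` hom A B) \<le> card Au * n" .
    then show "\<exists>w\<in>hom B C. card (\<chi> ` (\<lambda>f. cmp w f) ` hom A B) \<le> card Au * n"
      using w(1) by blast
  qed
qed

end

lemma arith_aux: "(c::nat) < k \<Longrightarrow> g < s \<Longrightarrow> s * c + g < s * k"
proof -
  assume "c < k" "g < s"
  then have "s * c + g < s * (c + 1)" by simp
  also have "\<dots> \<le> s * k" by (rule mult_le_mono2) (use \<open>c < k\<close> in simp)
  finally show ?thesis .
qed

lemma inj_aux: assumes s: "(s::nat) > 0" shows "inj_on (\<lambda>(c,i). s * c + i) (X \<times> {0..<s})"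
proof (rule inj_onI)
  fix x y assume "x \<in> X \<times> {0..<s}" "y \<in> X \<times> {0..<s}"
    "(\<lambda>(c,i). s * c + i) x = (\<lambda>(c,i). s * c + i) y"
  then obtain c i c' i' where e: "x = (c,i)" "y = (c',i')" "i < s" "i' < s" "s * c + i = s * c' + i'"
    by auto
  have d1: "(i + c * s) div s = c" using s e(3) by simp
  have d2: "(i' + c' * s) div s = c'" using s e(4) by simp
  have "i + c * s = i' + c' * s" using e(5) by (simp add: mult.commute add.commute)
  then have cc: "c = c'" using d1 d2 by metis
  then have "i = i'" using e(5) by simp
  then show "x = y" using cc e by simp
qed

context rcat begin

lemma rep_uniq: assumes C: "C \<in> Ob" and f: "f \<in> hom A C" and a: "\<alpha> \<in> Au" "\<beta> \<in> Au"
  and eq: "cmp (rep (cls f)) \<alpha> = cmp (rep (cls f)) \<beta>" shows "\<alpha> = \<beta>"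
  using monoD[OF AOb AOb C rep_hom[OF C f] Aut_hom[OF a(1)] Aut_hom[OF a(2)] eq] .

lemma lower: assumes S: "S \<subseteq> Au" "finite S" and n: "n \<ge> 1" "\<not> Qs (n - 1)" and q: "Q m"
  shows "card S * n \<le> m"
proof (cases "card S = 0")
  case True then show ?thesis by simp
next
  case False
  define s where "s = card S"
  have s1: "s \<ge> 1" using False s_def by simp
  obtain k B where kB: "(k::nat) \<ge> 2" "B \<in> Ob" "\<forall>C\<in>Ob. \<not> arrows_sim hom cmp idm C B A k (n - 1)"
    using n(2) unfolding Qs_def by blast
  have k_le: "k \<le> s * k" using mult_le_mono1[OF s1, of k] by simp
  have sk: "s * k \<ge> 2" by (rule le_trans[OF kB(1) k_le])
  obtain C where C: "C \<in> Ob" "arrows hom cmp C B A (s * k) m" using q sk kB(2) unfolding Q_def by blast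
  have na: "\<not> arrows_sim hom cmp idm C B A k (n - 1)" using kB(3) C(1) by blast
  then have "\<exists>\<chi>s :: 'm set \<Rightarrow> nat. (\<forall>X\<in>binom hom cmp idm C A. \<chi>s X < k) \<and>
    \<not> (\<exists>w\<in>hom B C. card (\<chi>s ` (\<lambda>f. cls (cmp w f)) ` hom A B) \<le> n - 1)"
    unfolding arrows_sim_def not_all not_imp .
  then obtain \<chi>s :: "'m set \<Rightarrow> nat" where chs0: "\<forall>X\<in>binom hom cmp idm C A. \<chi>s X < k"
    "\<not> (\<exists>w\<in>hom B C. card (\<chi>s ` (\<lambda>f. cls (cmp w f)) ` hom A B) \<le> n - 1)"
    by (elim exE conjE)
  have chs: "\<forall>X\<in>binom hom cmp idm C A. \<chi>s X < k"
    "\<forall>w\<in>hom B C. \<not> card (\<chi>s ` (\<lambda>f. cls (cmp w f)) ` hom A B) \<le> n - 1"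
    using chs0 by blast+
  obtain e where e: "bij_betw e {0..<s} S" unfolding s_def using ex_bij_betw_nat_finite[OF S(2)] by blast
  have eA: "e i \<in> Au" if "i < s" for i using e S(1) that unfolding bij_betw_def by auto
  have einj: "e i = e j \<Longrightarrow> i < s \<Longrightarrow> j < s \<Longrightarrow> i = j" for i j
    using e unfolding bij_betw_def inj_on_def by auto
  define P where "P f i \<longleftrightarrow> i < s \<and> f = cmp (rep (cls f)) (e i)" for f i
  have Puniq: "i = j" if fh: "f \<in> hom A C" and pi: "P f i" and pj: "P f j" for f i j
  proof -
    have i: "i < s" "f = cmp (rep (cls f)) (e i)" using pi unfolding P_def by blast+
    have j: "j < s" "f = cmp (rep (cls f)) (e j)" using pj unfolding P_def by blast+
    have eq: "cmp (rep (cls f)) (e i) = cmp (rep (cls f)) (e j)" using i(2) j(2) by (rule trans[OF sym])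
    have "e i = e j" by (rule rep_uniq[OF C(1) fh eA[OF i(1)] eA[OF j(1)] eq])
    then show ?thesis using einj i(1) j(1) by blast
  qed
  define g where "g f = (if \<exists>i. P f i then (THE i. P f i) else 0)" for f
  have gP: "g f = i" if fh: "f \<in> hom A C" and pi: "P f i" for f i
  proof -
    have ex: "\<exists>i. P f i" using pi by blast
    have "g f = (THE i. P f i)" unfolding g_def using ex by (rule if_P)
    also have "\<dots> = i" by (rule the_equality[of "P f" i, OF pi]) (rule Puniq[OF fh _ pi])
    finally show ?thesis .
  qed
  have gs: "g f < s" if fh: "f \<in> hom A C" for f
  proof (cases "\<exists>i. P f i")
    case True then obtain i where pi: "P f i" by blast
    have "i < s" using pi unfolding P_def by blast
    then show ?thesis using gP[OF fh pi] by simp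
  next
    case False then show ?thesis unfolding g_def using s1 by auto
  qed
  define \<chi> where "\<chi> f = s * \<chi>s (cls f) + g f" for f
  have chx: "\<chi> x < s * k" if xh: "x \<in> hom A C" for x
  proof -
    have "\<chi>s (cls x) < k" using chs(1) cls_binom[OF C(1) xh] by blast
    then show ?thesis unfolding \<chi>_def using gs[OF xh] by (rule arith_aux)
  qed
  then have hk: "\<forall>x\<in>hom A C. \<chi> x < s * k" by blast
  have "\<forall>\<chi>' :: 'm \<Rightarrow> nat. (\<forall>x\<in>hom A C. \<chi>' x < s * k) \<longrightarrow>
        (\<exists>w\<in>hom B C. card (\<chi>' ` ((\<lambda>f. cmp w f) ` hom A B)) \<le> m)"
    using C(2) unfolding arrows_def .
  then have "(\<forall>x\<in>hom A C. \<chi> x < s * k) \<longrightarrow>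
        (\<exists>w\<in>hom B C. card (\<chi> ` ((\<lambda>f. cmp w f) ` hom A B)) \<le> m)"
    by (rule spec)
  then have "\<exists>w\<in>hom B C. card (\<chi> ` ((\<lambda>f. cmp w f) ` hom A B)) \<le> m" using hk by (rule mp)
  then obtain w where w: "w \<in> hom B C" "card (\<chi> ` (\<lambda>f. cmp w f) ` hom A B) \<le> m"
    by (rule bexE)
  define CI where "CI = \<chi>s ` (\<lambda>f. cls (cmp w f)) ` hom A B"
  have CIn: "card CI \<ge> n" using chs(2) w(1) CI_def by force
  have "CI \<subseteq> {..<k}" unfolding CI_def using chs(1) cls_binom[OF C(1)] hom_cw[OF kB(2) C(1) w(1)] by auto
  then have finCI: "finite CI" by (rule finite_subset[OF _ finite_lessThan])
  have img_sub: "\<chi> ` (\<lambda>f. cmp w f) ` hom A B \<subseteq> {..<s*k}"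
    using hk hom_cw[OF kB(2) C(1) w(1)] by auto
  have sub: "(\<lambda>(c,i). s * c + i) ` (CI \<times> {0..<s}) \<subseteq> \<chi> ` (\<lambda>f. cmp w f) ` hom A B"
  proof clarify
    fix c i assume ci: "c \<in> CI" "i \<in> {0..<s}"
    then obtain f where f: "f \<in> hom A B" "c = \<chi>s (cls (cmp w f))" unfolding CI_def by blast
    define u where "u = cmp w f"
    have u: "u \<in> hom A C" using hom_cw[OF kB(2) C(1) w(1) f(1)] u_def by simp
    obtain \<gamma> where g: "\<gamma> \<in> Au" "rep (cls u) = cmp u \<gamma>" using rep_cls[OF C(1) u] by blast
    define \<delta> where "\<delta> = cmp \<gamma> (e i)"
    have d: "\<delta> \<in> Au" using Aut_comp[OF g(1) eA] ci \<delta>_def by simp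
    define h where "h = cmp f \<delta>"
    have h: "h \<in> hom A B" using comp[OF AOb AOb kB(2)] f(1) Aut_hom[OF d] h_def by blast
    have v1: "cmp w h = cmp u \<delta>" unfolding h_def u_def
      using assoc[OF AOb AOb kB(2) C(1) Aut_hom[OF d] f(1) w(1)] by simp
    have v2: "cmp (rep (cls u)) (e i) = cmp u \<delta>" unfolding g(2) \<delta>_def
      using assoc[OF AOb AOb AOb C(1) Aut_hom[OF eA] Aut_hom[OF g(1)] u] ci by simp
    have clsv: "cls (cmp w h) = cls u" using v1 cls_Aut[OF C(1) u d] by simp
    have vC: "cmp w h \<in> hom A C" using hom_cw[OF kB(2) C(1) w(1) h] .
    have "P (cmp w h) i" unfolding P_def using clsv v1 v2 ci by simp
    then have "g (cmp w h) = i" by (rule gP[OF vC])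
    then have "\<chi> (cmp w h) = s * c + i" unfolding \<chi>_def using clsv f(2) u_def by simp
    moreover have "\<chi> (cmp w h) \<in> \<chi> ` (\<lambda>f. cmp w f) ` hom A B" using h by blast
    ultimately show "s * c + i \<in> \<chi> ` (\<lambda>f. cmp w f) ` hom A B" by simp
  qed
  have "card CI * s = card (CI \<times> {0..<s})" by (simp add: card_cartesian_product)
  also have "\<dots> = card ((\<lambda>(c,i). s * c + i) ` (CI \<times> {0..<s}))"
    using card_image[OF inj_aux[of s CI]] s1 by simp
  also have "\<dots> \<le> card (\<chi> ` (\<lambda>f. cmp w f) ` hom A B)"
    by (rule card_mono[OF finite_subset[OF img_sub finite_lessThan] sub])
  also have "\<dots> \<le> m" using w(2) .
  finally have m1: "card CI * s \<le> m" .
  have "s * n \<le> s * card CI" using CIn by (rule mult_le_mono2)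
  also have "\<dots> = card CI * s" by (rule mult.commute)
  also have "\<dots> \<le> m" by (rule m1)
  finally have "s * n \<le> m" .
  then show ?thesis unfolding s_def .
qed

end

theorem proposition3p1:
  fixes Ob :: "'o set" and hom :: "'o \<Rightarrow> 'o \<Rightarrow> 'm set"
    and cmp :: "'m \<Rightarrow> 'm \<Rightarrow> 'm" and idm :: "'o \<Rightarrow> 'm" and A :: 'o
  assumes "is_category Ob hom cmp idm"
    and "all_mono Ob hom cmp"
    and "A \<in> Ob"
  shows "(small_ramsey_deg Ob hom cmp A \<noteq> \<infinity> \<longleftrightarrow>
            small_ramsey_deg_sim Ob hom cmp idm A \<noteq> \<infinity> \<and> finite (Aut hom cmp idm A))
       \<and> (small_ramsey_deg Ob hom cmp A \<noteq> \<infinity> \<longrightarrow>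
            small_ramsey_deg Ob hom cmp A
              = enat (card (Aut hom cmp idm A)) * small_ramsey_deg_sim Ob hom cmp idm A)"
proof -
  interpret rcat Ob hom cmp idm A using assms by unfold_locales
  have P1: "(\<lambda>n. 0 < n \<and> (\<forall>k\<ge>2. \<forall>B\<in>Ob. \<exists>C\<in>Ob. arrows hom cmp C B A k n)) = Q"
  proof (rule ext)
    fix n show "(0 < n \<and> (\<forall>k\<ge>2. \<forall>B\<in>Ob. \<exists>C\<in>Ob. arrows hom cmp C B A k n)) = Q n"
      unfolding Q_def[symmetric] using not_Q0 by (cases n) auto
  qed
  have P2: "(\<lambda>n. 0 < n \<and> (\<forall>k\<ge>2. \<forall>B\<in>Ob. \<exists>C\<in>Ob. arrows_sim hom cmp idm C B A k n)) = Qs"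
  proof (rule ext)
    fix n show "(0 < n \<and> (\<forall>k\<ge>2. \<forall>B\<in>Ob. \<exists>C\<in>Ob. arrows_sim hom cmp idm C B A k n)) = Qs n"
      unfolding Qs_def[symmetric] using not_Qs0 by (cases n) auto
  qed
  have T: "small_ramsey_deg Ob hom cmp A = (if \<exists>n. Q n then enat (LEAST n. Q n) else \<infinity>)"
    unfolding small_ramsey_deg_def Let_def P1 ..
  have Ts: "small_ramsey_deg_sim Ob hom cmp idm A = (if \<exists>n. Qs n then enat (LEAST n. Qs n) else \<infinity>)"
    unfolding small_ramsey_deg_sim_def Let_def P2 ..
  have nq0: "\<not> Qs (1 - 1)" using not_Qs0 by simp
  have fwd: "(\<exists>n. Qs n) \<and> finite Au" if "Q m" for m
  proof
    show "\<exists>n. Qs n" using Q_Qs[OF that] by blast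
    show "finite Au"
    proof (rule ccontr)
      assume "infinite Au"
      then obtain S where S: "S \<subseteq> Au" "finite S" "card S = Suc m"
        using infinite_arbitrarily_large by blast
      from lower[OF S(1,2) _ nq0 that] S(3) show False by simp
    qed
  qed
  have bwd: "\<exists>m. Q m" if "Qs n" "finite Au" for n
    using upper[OF that(2,1)] by blast
  have eq: "(LEAST n. Q n) = card Au * (LEAST n. Qs n)" if qm: "Q m" for m
  proof -
    have fin: "finite Au" using fwd[OF qm] by blast
    obtain n0 where "Qs n0" using fwd[OF qm] by blast
    define n where "n = (LEAST n. Qs n)"
    have qn: "Qs n" unfolding n_def by (rule LeastI) fact
    have n1: "n \<ge> 1" using qn not_Qs0 by (cases n) auto
    have nq: "\<not> Qs (n - 1)" unfolding n_def using n1 n_def not_less_Least by (metis diff_less zero_less_one less_le_trans)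
    have q0: "Q (LEAST n. Q n)" by (rule LeastI) (rule qm)
    have "(LEAST n. Q n) \<le> card Au * n" using upper[OF fin qn] by (rule Least_le)
    moreover have "card Au * n \<le> (LEAST n. Q n)" using lower[OF subset_refl fin n1 nq q0] .
    ultimately show ?thesis unfolding n_def by simp
  qed
  show ?thesis
  proof (intro conjI impI)
    show "(small_ramsey_deg Ob hom cmp A \<noteq> \<infinity>) =
      (small_ramsey_deg_sim Ob hom cmp idm A \<noteq> \<infinity> \<and> finite Au)"
      unfolding T Ts using fwd bwd by auto
  next
    assume "small_ramsey_deg Ob hom cmp A \<noteq> \<infinity>"
    then obtain m where m: "Q m" unfolding T by (auto split: if_splits)
    have "\<exists>n. Qs n" using fwd[OF m] by blast
    then show "small_ramsey_deg Ob hom cmp A = enat (card Au) * small_ramsey_deg_sim Ob hom cmp idm A"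
      unfolding T Ts using m eq[OF m] by auto
  qed
qed

end
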